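(* Let $p$ be an odd prime, $k\ge 1$, and let $f:\mathbb{F}_{p^{2k}}\to\mathbb{F}_p$ satisfy Condition A with sign $\epsilon\in\{1,-1\}$. For $0\le i\le p-1$ let $D_i=\{x\in\mathbb{F}_{p^{2k}} : f(x)=i\}$. Then (1) $|D_1|=|D_2|=\cdots=|D_{p-1}|$; (2) $|D_0|=p^{2k-1}+\epsilon(p^k-p^{k-1})$ and $|D_i|=p^{2k-1}-\epsilon p^{k-1}$ for every $1\le i\le p-1$.
   Context: Let $\zeta_p$ be a primitive complex $p$-th root of unity and $\mathrm{tr}:\mathbb{F}_{p^{n}}\to\mathbb{F}_p$ the absolute trace $\mathrm{tr}(x)=\sum_{i=0}^{n-1}x^{p^i}$. For $f:\mathbb{F}_{p^n}\to\mathbb{F}_p$ the Walsh transform is $\mathcal{W}_f(b)=\sum_{x\in\mathbb{F}_{p^n}}\zeta_p^{f(x)+\mathrm{tr}(bx)}$, $b\in\mathbb{F}_{p^n}$. Condition A: $p$ is an odd prime and $f:\mathbb{F}_{p^{2k}}\to\mathbb{F}_p$ satisfies $f(0)=0$, $f(-x)=f(x)$ for all $x$; there is an integer $l$ with $\gcd(l-1,p-1)=1$ such that $f(\alpha x)=\alpha^l f(x)$ for all $\alpha\in\mathbb{F}_p$, $x\in\mathbb{F}_{p^{2k}}$; and there exist a constant $\epsilon\in\{1,-1\}$ and a function $f^*:\mathbb{F}_{p^{2k}}\to\mathbb{F}_p$ such that $\mathcal{W}_f(b)=\epsilon p^k\zeta_p^{f^*(b)}$ for all $b\in\mathbb{F}_{p^{2k}}$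 (i.e. $f$ is a weakly regular bent function; one writes $\epsilon=(-1)^{(p-1)k/2}\mu$ with $\mu=\pm1$). *)

theory Defs
  imports Complex_Main "HOL-Computational_Algebra.Primes"
begin

text \<open>The finite field F_{p^n} is modelled as a finite field type 'a with CARD('a) = p^n.
  Elements of the prime field F_p are identified with the naturals 0..p-1
  (via of_nat inside 'a).\<close>

definition fp_val :: "nat \<Rightarrow> 'a::{field,finite} \<Rightarrow> nat" where
  "fp_val p y = (THE i. i < p \<and> of_nat i = y)"

definition abs_trace :: "nat \<Rightarrow> nat \<Rightarrow> 'a::{field,finite} \<Rightarrow> nat" where
  "abs_trace p n x = fp_val p (\<Sum>i<n. x ^ (p ^ i))"

definition walsh :: "nat \<Rightarrow> nat \<Rightarrow> complex \<Rightarrow> ('a::{field,finite} \<Rightarrow> nat) \<Rightarrow> 'a \<Rightarrow> complex" where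
  "walsh p n \<zeta> f b = (\<Sum>x\<in>(UNIV::'a set). \<zeta> ^ (f x + abs_trace p n (b * x)))"

definition conditionA :: "nat \<Rightarrow> nat \<Rightarrow> complex \<Rightarrow> ('a::{field,finite} \<Rightarrow> nat) \<Rightarrow> int \<Rightarrow> bool" where
  "conditionA p k \<zeta> f \<epsilon> \<longleftrightarrow>
     (\<forall>x. f x < p) \<and> f 0 = 0 \<and> (\<forall>x. f (- x) = f x) \<and>
     (\<exists>l::nat. gcd (int l - 1) (int p - 1) = 1 \<and>
        (\<forall>a<p. \<forall>x. f (of_nat a * x) = (a ^ l * f x) mod p)) \<and>
     \<epsilon> \<in> {1, -1} \<and>
     (\<exists>fs :: 'a \<Rightarrow> nat. (\<forall>b. fs b < p) \<and>
        (\<forall>b. walsh p (2 * k) \<zeta> f b = of_int \<epsilon> * of_nat p ^ k * \<zeta> ^ (fs b)))"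

end

theory Submission
  imports Defs "Berlekamp_Zassenhaus.Factor_Bound"
begin

lemma invol_even:
  assumes "finite B" "\<forall>x\<in>B. g x \<in> B \<and> g (g x) = x \<and> g x \<noteq> x"
  shows "even (card B)"
  using assms
proof (induction "card B" arbitrary: B rule: less_induct)
  case less
  show ?case
  proof (cases "B = {}")
    case True then show ?thesis by simp
  next
    case False
    then obtain x where x: "x \<in> B" by blast
    define B' where "B' = B - {x, g x}"
    have gx: "g x \<in> B" "g x \<noteq> x" using less.prems x by auto
    have cB: "card B = card B' + 2"
    proof -
      have "card B = card (B - {x, g x}) + card {x, g x}"
        using less.prems(1) x gx by (metis card_Diff_subset card_mono empty_subsetI finite.emptyI finite_insert insert_subset le_add_diff_inverse2 add.commute)
      then show ?thesis using gx by (simp add: B'_def)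
    qed
    have "even (card B')"
    proof (rule less.hyps)
      show "card B' < card B" using cB by simp
      show "finite B'" using less.prems(1) by (simp add: B'_def)
      show "\<forall>y\<in>B'. g y \<in> B' \<and> g (g y) = y \<and> g y \<noteq> y"
        using less.prems(2) x unfolding B'_def by (metis Diff_iff insertCI insertE singletonD)
    qed
    then show ?thesis using cB by simp
  qed
qed

lemma zeta_mod: "(z::complex) ^ p = 1 \<Longrightarrow> z ^ n = z ^ (n mod p)"
proof -
  assume z: "z ^ p = 1"
  have "z ^ n = z ^ (p * (n div p)) * z ^ (n mod p)" by (metis div_mult_mod_eq power_add mult.commute)
  moreover have "z ^ (p * (n div p)) = 1" by (simp add: power_mult z)
  ultimately have "z ^ n = z ^ (n mod p)" by simp
  then show ?thesis .
qed

lemma two_ne_zero_field: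
  assumes "odd (card (UNIV :: 'a::{field,finite} set))"
  shows "(1 + 1 :: 'a) \<noteq> 0"
proof
  assume h: "(1 + 1 :: 'a) = 0"
  have "even (card (UNIV :: 'a set))"
  proof (rule invol_even)
    show "finite (UNIV :: 'a set)" by simp
    show "\<forall>x\<in>(UNIV::'a set). x + 1 \<in> UNIV \<and> x + 1 + 1 = x \<and> x + 1 \<noteq> x"
      using h by (simp add: add.assoc)
  qed
  then show False using assms by simp
qed

definition phi :: "nat \<Rightarrow> int poly" where "phi p = (\<Sum>i<p. [:0,1:]^i)"
definition psi :: "nat \<Rightarrow> int poly" where "psi p = (\<Sum>i<p. monom (int (p choose (i+1))) i)"

lemma phi_mult: "([:0,1:] - 1) * phi p = [:0,1:]^p - 1"
  unfolding phi_def by (rule power_diff_1_eq[symmetric])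

lemma coeff_psi: "coeff (psi p) i = (if i < p then int (p choose (i+1)) else 0)"
  unfolding psi_def coeff_sum coeff_monom by (simp only: sum.delta finite_lessThan lessThan_iff)

lemma pc1: "[:1,1::int:] - 1 = [:0,1:]"
  by (rule poly_eqI) (simp add: coeff_pCons split: nat.split)

lemma pc2: "pcompose [:0,1:] [:1,1::int:] = [:1,1:]" by (simp add: pcompose_pCons)

lemma psi_shift: "[:0,1:] * psi p = [:1,1:]^p - 1"
proof (rule poly_eqI)
  fix n
  show "coeff ([:0,1:] * psi p) n = coeff ([:1,1:]^p - 1) n"
  proof (cases n)
    case 0 then show ?thesis by (simp add: coeff_0_power)
  next
    case (Suc m)
    show ?thesis
    proof (cases "Suc m \<le> p")
      case True
      then show ?thesis using Suc coeff_linear_poly_power[of "Suc m" p "1::int" 1] by (simp add: coeff_psi)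
    next
      case False
      have "degree ([:1,1::int:]^p) = p" by (rule degree_linear_power)
      then have "coeff ([:1,1::int:]^p) n = 0" using False Suc by (intro coeff_eq_0) auto
      then show ?thesis using Suc False by (simp add: coeff_psi)
    qed
  qed
qed

lemma psi_eq: "psi p = pcompose (phi p) [:1,1:]"
proof -
  have "[:0,1:] * pcompose (phi p) [:1,1:] = pcompose ([:0,1:] - 1) [:1,1::int:] * pcompose (phi p) [:1,1:]"
    by (simp only: pcompose_diff pcompose_1 pc2 pc1)
  also have "\<dots> = pcompose (([:0,1:] - 1) * phi p) [:1,1::int:]"
    by (simp only: pcompose_mult)
  also have "\<dots> = pcompose ([:0,1:]^p - 1) [:1,1:]" by (simp only: phi_mult)
  also have "\<dots> = (pcompose [:0,1:] [:1,1::int:])^p - 1"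
    by (simp only: pcompose_diff pcompose_1 pcompose_hom.hom_power)
  also have "\<dots> = [:1,1:]^p - 1" by (simp only: pc2)
  finally have "[:0,1:] * psi p = [:0,1:] * pcompose (phi p) [:1,1:]" using psi_shift by simp
  moreover have "[:0,1::int:] \<noteq> 0" by simp
  ultimately show ?thesis by simp
qed

lemma eis_core:
  fixes A B C :: "int poly" and q :: int
  assumes pr: "prime q" and C: "C = A * B" and A0: "q dvd coeff A 0" and B0: "\<not> q dvd coeff B 0"
    and lA: "\<not> q dvd lead_coeff A" and dA: "degree A < n" and Cd: "\<forall>i<n. q dvd coeff C i"
  shows False
proof -
  define t where "t = (LEAST i. \<not> q dvd coeff A i)"
  have ex: "\<not> q dvd coeff A (degree A)" using lA by simp
  have t1: "\<not> q dvd coeff A t" unfolding t_def by (rule LeastI[of _ "degree A"]) (rule ex)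
  have t2: "t \<le> degree A" unfolding t_def by (rule Least_le) (rule ex)
  have t3: "\<And>i. i < t \<Longrightarrow> q dvd coeff A i" unfolding t_def using not_less_Least by blast
  have "t \<noteq> 0" using t1 A0 by (cases t) auto
  have "coeff C t = (\<Sum>i\<le>t. coeff A i * coeff B (t - i))" using C by (simp add: coeff_mult)
  also have "\<dots> = (\<Sum>i<t. coeff A i * coeff B (t - i)) + coeff A t * coeff B 0"
    by (simp add: lessThan_Suc_atMost[symmetric])
  finally have eq: "coeff C t = (\<Sum>i<t. coeff A i * coeff B (t - i)) + coeff A t * coeff B 0" .
  have "q dvd (\<Sum>i<t. coeff A i * coeff B (t - i))" by (rule dvd_sum) (simp add: t3)
  moreover have "q dvd coeff C t" using Cd t2 dA by simp
  ultimately have "q dvd coeff A t * coeff B 0" using eq by (simp add: dvd_add_right_iff)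
  then show False using pr t1 B0 by (simp add: prime_dvd_mult_iff)
qed


lemma coeff_psi_dvd: "prime p \<Longrightarrow> i < p - 1 \<Longrightarrow> int p dvd coeff (psi p) i"
  unfolding coeff_psi using dvd_choose_prime[of "i+1" p] by (auto simp: prime_gt_0_nat)

lemma degree_psi: "prime p \<Longrightarrow> degree (psi p) = p - 1"
proof -
  assume p: "prime p"
  then have "p > 0" by (simp add: prime_gt_0_nat)
  have "coeff (psi p) (p - 1) \<noteq> 0" using \<open>p>0\<close> by (simp add: coeff_psi)
  then have "p - 1 \<le> degree (psi p)" by (rule le_degree)
  moreover have "degree (psi p) \<le> p - 1" by (rule degree_le) (auto simp: coeff_psi)
  ultimately show ?thesis by simp
qed

lemma psi_irred:
  assumes p: "prime p" and fac: "psi p = A * B" and dA: "degree A \<ge> 1" and dB: "degree B \<ge> 1"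
  shows False
proof -
  have pr: "prime (int p)" using p by simp
  have p0: "p > 0" using p by (simp add: prime_gt_0_nat)
  have A0: "A \<noteq> 0" and B0: "B \<noteq> 0" using dA dB by auto
  have deg: "degree A + degree B = p - 1" using fac degree_psi[OF p] A0 B0 by (simp add: degree_mult_eq)
  have "coeff (psi p) 0 = int p" using p0 by (simp add: coeff_psi)
  then have c0: "coeff A 0 * coeff B 0 = int p" using fac by (simp add: coeff_mult_0)
  have lc: "lead_coeff A * lead_coeff B = 1"
  proof -
    have "lead_coeff (psi p) = 1" using p0 by (simp add: degree_psi[OF p] coeff_psi)
    then show ?thesis using fac by (simp add: lead_coeff_mult)
  qed
  have lA: "\<not> int p dvd lead_coeff A" and lB: "\<not> int p dvd lead_coeff B"
    using lc pr by (metis dvd_mult2 dvd_mult not_prime_unit)+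
  have Cd: "\<forall>i<p-1. int p dvd coeff (psi p) i" using coeff_psi_dvd[OF p] by blast
  have "int p dvd coeff A 0 * coeff B 0" using c0 by simp
  then have "int p dvd coeff A 0 \<or> int p dvd coeff B 0" using pr by (simp add: prime_dvd_mult_iff)
  moreover have nb: "\<not> (int p dvd coeff A 0 \<and> int p dvd coeff B 0)"
  proof
    assume "int p dvd coeff A 0 \<and> int p dvd coeff B 0"
    then obtain a b where "coeff A 0 = int p * a" "coeff B 0 = int p * b" by (auto elim!: dvdE)
    with c0 have "int p * (int p * (a * b)) = int p * 1" by (simp add: algebra_simps)
    then have "int p * (a * b) = 1" using p0 by simp
    then have "int p dvd 1" by (metis dvd_triv_left)
    then show False using pr by (simp add: not_prime_unit)
  qed
  ultimately show False
  proof (elim disjE)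
    assume "int p dvd coeff A 0"
    moreover have "\<not> int p dvd coeff B 0" using nb calculation by blast
    ultimately show False
      using eis_core[OF pr fac _ _ lA _ Cd] deg dB by linarith
  next
    assume "int p dvd coeff B 0"
    moreover have "\<not> int p dvd coeff A 0" using nb calculation by blast
    moreover have "psi p = B * A" using fac by (simp add: mult.commute)
    moreover have "degree B < p - 1" using deg dA by linarith
    ultimately show False
      using eis_core[OF pr _ _ _ lB _ Cd] by blast
  qed
qed


interpretation of_rat_poly_hom: map_poly_idom_hom "of_rat :: rat \<Rightarrow> complex" ..

lemma degree_phi: "prime p \<Longrightarrow> degree (phi p) = p - 1"
  using degree_psi[of p] psi_eq[of p] by (simp add: degree_pcompose)

lemma phi_irred_rat:
  fixes g h :: "rat poly"
  assumes p: "prime p" and fac: "map_poly of_int (phi p) = g * h" and dg: "degree g \<ge> 1" and dh: "degree h \<ge> 1"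
  shows False
proof -
  obtain g' h' where f: "phi p = g' * h'" and d: "degree g' = degree g" "degree h' = degree h"
    using rat_to_int_factor[OF fac] by blast
  have "psi p = pcompose g' [:1,1:] * pcompose h' [:1,1:]" using f psi_eq[of p] by (simp add: pcompose_mult)
  moreover have "degree (pcompose g' [:1,1:]) \<ge> 1" "degree (pcompose h' [:1,1::int:]) \<ge> 1"
    using d dg dh by (simp_all add: degree_pcompose)
  ultimately show False using psi_irred[OF p] by blast
qed

lemma sum_roots_zero:
  fixes z :: complex
  assumes "z ^ p = 1" "z \<noteq> 1"
  shows "(\<Sum>i<p. z ^ i) = 0"
proof -
  have "(z - 1) * (\<Sum>i<p. z ^ i) = 0" using power_diff_1_eq[of z p] assms by simp
  then show ?thesis using assms by simp
qed

lemma indep_aux: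
  fixes z :: complex and Q :: "rat poly"
  assumes p: "prime p" and z: "z ^ p = 1" "z \<noteq> 1"
    and Qd: "degree Q < p - 1" and Qz: "poly (map_poly of_rat Q) z = 0"
  shows "Q = 0"
proof (rule ccontr)
  assume Q0: "Q \<noteq> 0"
  define F :: "rat poly" where "F = map_poly of_int (phi p)"
  have p1: "p > 1" using p prime_gt_1_nat by blast
  have dF: "degree F = p - 1" unfolding F_def using degree_phi[OF p] by simp
  have "map_poly (of_rat :: rat \<Rightarrow> complex) F = map_poly of_int (phi p)"
    unfolding F_def by (simp add: map_poly_map_poly o_def)
  then have Fz: "poly (map_poly of_rat F) z = 0"
    using sum_roots_zero[OF z] by (simp add: phi_def of_int_poly_hom.hom_sum poly_sum of_int_poly_hom.hom_power)
  have F0: "F \<noteq> 0" using dF p1 by (metis degree_0 zero_less_diff less_numeral_extra(3))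
  define G where "G = gcd Q F"
  obtain H where FGH: "F = G * H" unfolding G_def by (meson dvdE gcd_dvd2)
  have G0: "G \<noteq> 0" and H0: "H \<noteq> 0" using FGH F0 by auto
  have dGH: "degree G + degree H = p - 1" using FGH G0 H0 dF by (simp add: degree_mult_eq)
  have "degree G \<le> degree Q" unfolding G_def by (rule dvd_imp_degree_le[OF gcd_dvd1 Q0])
  then have "degree H \<ge> 1" using dGH Qd by linarith
  then have dG: "degree G = 0" using phi_irred_rat[OF p FGH[unfolded F_def]] by fastforce
  obtain x y where "x * Q + y * F = G" unfolding G_def using bezout_coefficients_fst_snd by blast
  then have "poly (map_poly of_rat (x * Q + y * F)) z = poly (map_poly of_rat G) z" by simp
  then have "poly (map_poly (of_rat :: rat \<Rightarrow> complex) G) z = 0"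
    using Qz Fz by (simp add: of_rat_poly_hom.hom_add of_rat_poly_hom.hom_mult)
  moreover have "G = [:coeff G 0:]" using degree_0_id[OF dG] by simp
  ultimately have "coeff G 0 = 0" by (metis map_poly_pCons map_poly_0 poly_pCons poly_0 of_rat_eq_0_iff add_0_right mult_zero_right pCons_0_0)
  then show False using G0 \<open>G = [:coeff G 0:]\<close> by simp
qed


lemma indep:
  fixes z :: complex and c :: "nat \<Rightarrow> int"
  assumes p: "prime p" and z: "z ^ p = 1" "z \<noteq> 1"
    and s: "(\<Sum>i<p. of_int (c i) * z ^ i) = 0"
  shows "\<forall>i<p. c i = c 0"
proof -
  have p1: "p > 1" using p prime_gt_1_nat by blast
  define d where "d i = c i - c (p - 1)" for i
  have "(\<Sum>i<p. of_int (d i) * z ^ i) = (\<Sum>i<p. of_int (c i) * z ^ i) - of_int (c (p - 1)) * (\<Sum>i<p. z ^ i)"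
    by (simp add: d_def algebra_simps sum_subtractf sum_distrib_left sum_distrib_right)
  also have "\<dots> = 0" using s sum_roots_zero[OF z] by simp
  finally have s2: "(\<Sum>i<p. of_int (d i) * z ^ i) = 0" .
  have spl: "{..<p} = {..<Suc (p - 1)}" using p1 by simp
  have s3: "(\<Sum>i<p - 1. of_int (d i) * z ^ i) = 0"
    using s2 unfolding spl by (simp add: d_def)
  define Q :: "rat poly" where "Q = (\<Sum>i<p - 1. monom (of_int (d i)) i)"
  have Qd: "degree Q < p - 1" unfolding Q_def
    by (rule degree_sum_less) (use p1 in \<open>auto intro: le_less_trans[OF degree_monom_le]\<close>)
  have Qz: "poly (map_poly of_rat Q) z = 0"
    unfolding Q_def using s3 by (simp add: of_rat_poly_hom.hom_sum poly_sum poly_monom)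
  have Q0: "Q = 0" by (rule indep_aux[OF p z Qd Qz])
  have "\<forall>i<p - 1. d i = 0"
  proof (intro allI impI)
    fix i assume i: "i < p - 1"
    have "coeff Q i = of_int (d i)" unfolding Q_def coeff_sum coeff_monom
      using i by (simp only: sum.delta finite_lessThan lessThan_iff if_True)
    then show "d i = 0" using Q0 by simp
  qed
  then have "\<forall>i<p. c i = c (p - 1)" unfolding d_def by (metis diff_Suc_1 eq_iff_diff_eq_0 less_Suc_eq spl lessThan_iff)
  then show ?thesis using p1 by (metis gr_implies_not0 neq0_conv)
qed


theorem lemma1:
  fixes p k :: nat and f :: "'a::{field,finite} \<Rightarrow> nat" and \<zeta> :: complex and \<epsilon> :: int
  assumes "prime p" and "odd p" and "k \<ge> 1"
    and "card (UNIV::'a set) = p ^ (2 * k)"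
    and "\<zeta> ^ p = 1" and "\<zeta> \<noteq> 1"
    and "conditionA p k \<zeta> f \<epsilon>"
  shows "(\<forall>i\<in>{1..p-1}. card {x. f x = i} = card {x. f x = 1}) \<and>
         int (card {x. f x = 0}) = int p ^ (2 * k - 1) + \<epsilon> * (int p ^ k - int p ^ (k - 1)) \<and>
         (\<forall>i\<in>{1..p-1}. int (card {x. f x = i}) = int p ^ (2 * k - 1) - \<epsilon> * int p ^ (k - 1))"
proof -
  note pr = assms(1) and z = assms(5,6)
  from assms(7) obtain fs where
    fp: "\<forall>x. f x < p" and f0: "f 0 = 0" and fev: "\<forall>x. f (- x) = f x" and eps: "\<epsilon> \<in> {1,-1}"
    and W: "\<forall>b. walsh p (2*k) \<zeta> f b = of_int \<epsilon> * of_nat p ^ k * \<zeta> ^ fs b"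
    unfolding conditionA_def by blast
  have p1: "p > 1" using pr prime_gt_1_nat by blast
  define N where "N i = card {x::'a. f x = i}" for i
  define S where "S = (\<Sum>x\<in>(UNIV::'a set). \<zeta> ^ f x)"
  define t where "t = abs_trace p (2*k) (0::'a)"
  have W0: "\<zeta> ^ t * S = of_int \<epsilon> * of_nat p ^ k * \<zeta> ^ fs 0"
  proof -
    have "walsh p (2*k) \<zeta> f 0 = \<zeta> ^ t * S"
      by (simp add: walsh_def t_def S_def power_add sum_distrib_right mult.commute)
    then show ?thesis using W by simp
  qed
  have SN: "S = (\<Sum>i<p. of_nat (N i) * \<zeta> ^ i)"
  proof -
    have "(\<Sum>i<p. \<Sum>x\<in>{x. x \<in> (UNIV::'a set) \<and> f x = i}. \<zeta> ^ f x) = S"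
      unfolding S_def by (rule sum.group) (use fp in auto)
    moreover have "\<And>i. (\<Sum>x\<in>{x. x \<in> (UNIV::'a set) \<and> f x = i}. \<zeta> ^ f x) = of_nat (N i) * \<zeta> ^ i"
    proof -
      fix i
      have "(\<Sum>x\<in>{x. x \<in> (UNIV::'a set) \<and> f x = i}. \<zeta> ^ f x) = (\<Sum>x\<in>{x. f x = i}. \<zeta> ^ i)"
        by (rule sum.cong) auto
      then show "(\<Sum>x\<in>{x. x \<in> (UNIV::'a set) \<and> f x = i}. \<zeta> ^ f x) = of_nat (N i) * \<zeta> ^ i"
        by (simp add: N_def)
    qed
    ultimately show ?thesis by (metis (no_types, lifting) sum.cong)
  qed
  have Nsum: "(\<Sum>i<p. N i) = p ^ (2 * k)"
  proof -
    have "(\<Sum>i<p. \<Sum>x\<in>{x. x \<in> (UNIV::'a set) \<and> f x = i}. (1::nat)) = (\<Sum>x\<in>(UNIV::'a set). 1)"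
      by (rule sum.group) (use fp in auto)
    then show ?thesis using assms(4) by (simp add: N_def)
  qed
  define u where "u = t mod p"
  have up: "u < p" using p1 by (simp add: u_def)
  define j where "j = (fs 0 + (p - u)) mod p"
  have jp: "j < p" using p1 by (simp add: j_def)
  have zt: "\<zeta> ^ t = \<zeta> ^ u" unfolding u_def by (rule zeta_mod[OF z(1)])
  have zu: "\<zeta> ^ (p - u) * \<zeta> ^ u = 1" using up z(1) by (simp add: power_add[symmetric])
  have Sj: "S = of_int \<epsilon> * of_nat p ^ k * \<zeta> ^ j"
  proof -
    have "S = \<zeta> ^ (p - u) * (\<zeta> ^ t * S)" using zt zu by (simp add: mult.assoc[symmetric])
    also have "\<dots> = of_int \<epsilon> * of_nat p ^ k * \<zeta> ^ (fs 0 + (p - u))"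
      using W0 by (simp add: power_add algebra_simps)
    also have "\<zeta> ^ (fs 0 + (p - u)) = \<zeta> ^ j" unfolding j_def by (rule zeta_mod[OF z(1)])
    finally show ?thesis .
  qed
  define a where "a i = int (N i) - (if i = j then \<epsilon> * int p ^ k else 0)" for i
  have "(\<Sum>i<p. of_int (a i) * \<zeta> ^ i) = (\<Sum>i<p. of_nat (N i) * \<zeta> ^ i) - (\<Sum>i<p. if i = j then of_int \<epsilon> * of_nat p ^ k * \<zeta> ^ i else 0)"
  proof -
    have "(\<Sum>i<p. of_int (a i) * \<zeta> ^ i) = (\<Sum>i<p. of_nat (N i) * \<zeta> ^ i - (if i = j then of_int \<epsilon> * of_nat p ^ k * \<zeta> ^ i else 0))"
      by (rule sum.cong[OF refl]) (simp add: a_def algebra_simps)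
    also have "\<dots> = (\<Sum>i<p. of_nat (N i) * \<zeta> ^ i) - (\<Sum>i<p. if i = j then of_int \<epsilon> * of_nat p ^ k * \<zeta> ^ i else 0)"
      by (rule sum_subtractf)
    finally show ?thesis .
  qed
  also have "\<dots> = 0" using SN Sj jp by (simp add: sum.delta')
  finally have "(\<Sum>i<p. of_int (a i) * \<zeta> ^ i) = 0" .
  then have aeq: "\<forall>i<p. a i = a 0" by (rule indep[OF pr z])
  have "(\<Sum>i<p. a i) = int (p ^ (2 * k)) - \<epsilon> * int p ^ k"
  proof -
    have "(\<Sum>i<p. a i) = (\<Sum>i<p. int (N i)) - (\<Sum>i<p. if i = j then \<epsilon> * int p ^ k else 0)"
      by (simp add: a_def sum_subtractf)
    also have "\<dots> = int (p ^ (2 * k)) - \<epsilon> * int p ^ k" using jp Nsum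
      by (simp add: sum.delta' of_nat_sum[symmetric] del: of_nat_sum)
    finally show ?thesis .
  qed
  moreover have "(\<Sum>i<p. a i) = int p * a 0"
  proof -
    have "(\<Sum>i<p. a i) = (\<Sum>i<p. a 0)" by (rule sum.cong) (use aeq in blast)+
    then show ?thesis by simp
  qed
  ultimately have pa: "int p * a 0 = int p ^ (2 * k) - \<epsilon> * int p ^ k" by simp
  have a0: "a 0 = int p ^ (2 * k - 1) - \<epsilon> * int p ^ (k - 1)"
  proof -
    obtain k' where k': "k = Suc k'" using assms(3) by (cases k) auto
    have e1: "int p ^ (2 * k) = int p * int p ^ (2 * k - 1)" by (simp add: k')
    have e2: "int p ^ k = int p * int p ^ (k - 1)" by (simp add: k')
    have "int p * a 0 = int p * int p ^ (2 * k - 1) - \<epsilon> * (int p * int p ^ (k - 1))"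
      using pa by (simp only: e1 e2)
    also have "\<dots> = int p * (int p ^ (2 * k - 1) - \<epsilon> * int p ^ (k - 1))"
      by (simp only: right_diff_distrib mult.left_commute)
    finally show ?thesis using p1 by simp
  qed
  have a0even: "even (a 0)"
  proof -
    have "odd (int p ^ (2 * k - 1))" "odd (int p ^ (k - 1))" using assms(2) by simp_all
    then obtain m n where mn: "int p ^ (2 * k - 1) = 2 * m + 1" "int p ^ (k - 1) = 2 * n + 1"
      by (meson oddE)
    show ?thesis
    proof (cases "\<epsilon> = 1")
      case True
      then have "a 0 = 2 * (m - n)" using a0 mn by simp
      then show ?thesis by simp
    next
      case False
      then have "\<epsilon> = -1" using eps by simp
      then have "a 0 = 2 * (m + n + 1)" using a0 mn by simp
      then show ?thesis by simp
    qed
  qed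
  have N0odd: "odd (N 0)"
  proof -
    have two: "(1 + 1 :: 'a) \<noteq> 0" by (rule two_ne_zero_field) (use assms(2,4) in simp)
    define B where "B = {x::'a. f x = 0} - {0}"
    have "even (card B)"
    proof (rule invol_even)
      show "finite B" by simp
      show "\<forall>x\<in>B. - x \<in> B \<and> - (- x) = x \<and> - x \<noteq> x"
      proof
        fix x assume "x \<in> B"
        then have "f x = 0" "x \<noteq> 0" by (auto simp: B_def)
        moreover have "- x \<noteq> x"
        proof
          assume "- x = x"
          then have "x + x = 0" by (metis add.right_inverse)
          then have "(1 + 1) * x = 0" by (simp add: distrib_right)
          then show False using two \<open>x \<noteq> 0\<close> by simp
        qed
        ultimately show "- x \<in> B \<and> - (- x) = x \<and> - x \<noteq> x" using fev by (simp add: B_def)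
      qed
    qed
    moreover have "N 0 = card B + 1" unfolding N_def B_def
      using card.remove[of "{x::'a. f x = 0}" 0] f0 by simp
    ultimately show ?thesis by simp
  qed
  have j0: "j = 0"
  proof (rule ccontr)
    assume "j \<noteq> 0"
    then have "a 0 = int (N 0)" by (simp add: a_def)
    then show False using a0even N0odd by simp
  qed
  have Ni: "\<And>i. i \<in> {1..p-1} \<Longrightarrow> int (N i) = a 0"
  proof -
    fix i assume "i \<in> {1..p-1}"
    then have "i < p" "i \<noteq> 0" using p1 by auto
    then have "a i = a 0" using aeq by blast
    moreover have "a i = int (N i)" using \<open>i \<noteq> 0\<close> j0 by (simp add: a_def)
    ultimately show "int (N i) = a 0" by simp
  qed
  have "1 \<in> {1..p-1}" using p1 by simp
  have c1: "\<forall>i\<in>{1..p-1}. card {x. f x = i} = card {x. f x = 1}"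
    using Ni[OF \<open>1 \<in> _\<close>] Ni unfolding N_def by (metis of_nat_eq_iff)
  have c2: "int (card {x. f x = 0}) = int p ^ (2 * k - 1) + \<epsilon> * (int p ^ k - int p ^ (k - 1))"
    using a0 j0 unfolding N_def[symmetric] by (simp add: a_def algebra_simps)
  have c3: "\<forall>i\<in>{1..p-1}. int (card {x. f x = i}) = int p ^ (2 * k - 1) - \<epsilon> * int p ^ (k - 1)"
    using Ni a0 unfolding N_def by simp
  show ?thesis using c1 c2 c3 by blast
qed

end
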